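(* In the two-asset bid-ask model described in the context, condition (NA2) holds if and only if, for all $t\le T-1$, $$\operatorname{ess\,sup}_{\mathcal{F}_t}S^a_{t+1}\ge S^a_t\quad\text{and}\quad S^b_t\ge\operatorname{ess\,inf}_{\mathcal{F}_t}S^b_{t+1}\quad\text{a.s.}$$
   Context: $(\Omega,\mathcal{F},(\mathcal{F}_t)_{t=0,\dots,T},\mathbb{P})$ filtered complete probability space, $\mathcal{F}_0$ trivial. $d=2$. For each $t$, $S^b_t,S^a_t$ are $\mathcal{F}_t$-measurable random variables with $0<S^b_t\le S^a_t$ a.s., and the solvency cone is $\mathbf{K}_t=\{x\in\mathbb{R}^2:\ x_1+y\,x_2\ge0\ \text{for all }y\in[S^b_t,S^a_t]\}$ (the cone generated by $S^a_te_1-e_2$ and $-S^b_te_1+e_2$). $L^0(\Gamma,\mathcal{F}_t)$: $\mathcal{F}_t$-measurable random vectors a.s. in $\Gamma$. $\mathsf{A}_{t,T}=\sum_{u=t}^TL^0(-\mathbf{K}_u,\mathcal{F}_u)$. (NA2): for every $t$ and $\eta_t\in L^0(\mathbb{R}^2,\mathcal{F}_t)$, if $(\eta_t+\mathsf{A}_{t,T})\cap L^0(\mathbf{K}_T,\mathcal{F}_T)\neq\emptyset$ then $\eta_t\in L^0(\mathbf{K}_t,\mathcal{F}_t)$. $\operatorname{ess\,sup}_{\mathcal{F}_t}$ and $\operatorname{ess\,inf}_{\mathcal{F}_t}$ denote the conditional essential supremum/infimum: the smallest (resp. largest) $\mathcal{F}_t$-measurable extended random variable a.s. dominating (resp. dominated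 by) the given variable. *)

theory Defs
  imports "HOL-Probability.Probability"
begin

definition solv_cone :: "(nat \<Rightarrow> 'a \<Rightarrow> real) \<Rightarrow> (nat \<Rightarrow> 'a \<Rightarrow> real) \<Rightarrow> nat \<Rightarrow> 'a \<Rightarrow> (real \<times> real) set" where
  "solv_cone Sb Sa t w = {x. \<forall>y \<in> {Sb t w .. Sa t w}. fst x + y * snd x \<ge> 0}"

definition L0 :: "'a measure \<Rightarrow> 'a measure \<Rightarrow> ('a \<Rightarrow> (real \<times> real) set) \<Rightarrow> ('a \<Rightarrow> real \<times> real) set" where
  "L0 M G \<Gamma> = {\<xi>. \<xi> \<in> borel_measurable G \<and> (AE w in M. \<xi> w \<in> \<Gamma> w)}"

definition A_set :: "'a measure \<Rightarrow> (nat \<Rightarrow> 'a measure) \<Rightarrow> (nat \<Rightarrow> 'a \<Rightarrow> real) \<Rightarrow> (nat \<Rightarrow> 'a \<Rightarrow> real)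
    \<Rightarrow> nat \<Rightarrow> nat \<Rightarrow> ('a \<Rightarrow> real \<times> real) set" where
  "A_set M F Sb Sa t T = {\<xi>. \<exists>\<xi>s. (\<forall>u \<in> {t..T}. \<xi>s u \<in> L0 M (F u) (\<lambda>w. uminus ` solv_cone Sb Sa u w))
        \<and> \<xi> = (\<lambda>w. \<Sum>u\<in>{t..T}. \<xi>s u w)}"

definition NA2 :: "'a measure \<Rightarrow> (nat \<Rightarrow> 'a measure) \<Rightarrow> (nat \<Rightarrow> 'a \<Rightarrow> real) \<Rightarrow> (nat \<Rightarrow> 'a \<Rightarrow> real) \<Rightarrow> nat \<Rightarrow> bool" where
  "NA2 M F Sb Sa T \<longleftrightarrow>
     (\<forall>t \<le> T. \<forall>\<eta> \<in> borel_measurable (F t).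
        (\<exists>\<xi> \<in> A_set M F Sb Sa t T. (\<lambda>w. \<eta> w + \<xi> w) \<in> L0 M (F T) (solv_cone Sb Sa T))
        \<longrightarrow> \<eta> \<in> L0 M (F t) (solv_cone Sb Sa t))"

definition is_cond_ess_sup :: "'a measure \<Rightarrow> 'a measure \<Rightarrow> ('a \<Rightarrow> real) \<Rightarrow> ('a \<Rightarrow> ereal) \<Rightarrow> bool" where
  "is_cond_ess_sup M G X Y \<longleftrightarrow> Y \<in> borel_measurable G \<and> (AE w in M. ereal (X w) \<le> Y w) \<and>
     (\<forall>Z \<in> borel_measurable G. (AE w in M. ereal (X w) \<le> Z w) \<longrightarrow> (AE w in M. Y w \<le> Z w))"

definition is_cond_ess_inf :: "'a measure \<Rightarrow> 'a measure \<Rightarrow> ('a \<Rightarrow> real) \<Rightarrow> ('a \<Rightarrow> ereal) \<Rightarrow> bool" where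
  "is_cond_ess_inf M G X Y \<longleftrightarrow> Y \<in> borel_measurable G \<and> (AE w in M. Y w \<le> ereal (X w)) \<and>
     (\<forall>Z \<in> borel_measurable G. (AE w in M. Z w \<le> ereal (X w)) \<longrightarrow> (AE w in M. Z w \<le> Y w))"

definition cond_ess_sup :: "'a measure \<Rightarrow> 'a measure \<Rightarrow> ('a \<Rightarrow> real) \<Rightarrow> 'a \<Rightarrow> ereal" where
  "cond_ess_sup M G X = (SOME Y. is_cond_ess_sup M G X Y)"

definition cond_ess_inf :: "'a measure \<Rightarrow> 'a measure \<Rightarrow> ('a \<Rightarrow> real) \<Rightarrow> 'a \<Rightarrow> ereal" where
  "cond_ess_inf M G X = (SOME Y. is_cond_ess_inf M G X Y)"

end

theory Submission
  imports Defs
begin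


definition gfun :: "ereal \<Rightarrow> real" where
  "gfun z = (if z = \<infinity> then 2 else if z = -\<infinity> then -2 else arctan (real_of_ereal z))"

lemma gfun_bound: "\<bar>gfun z\<bar> \<le> 2"
proof -
  have "\<bar>arctan x\<bar> \<le> 2" for x
    using arctan_bounded[of x] pi_less_4 by auto
  then show ?thesis by (auto simp: gfun_def)
qed

lemma gfun_ge: "-2 \<le> gfun z" using gfun_bound[of z] by linarith

lemma gfun_strict: "z < z' \<Longrightarrow> gfun z < gfun z'"
proof -
  assume a: "z < z'"
  have b: "- 2 < arctan x" "arctan x < 2" for x
    using arctan_bounded[of x] pi_less_4 by auto
  show ?thesis using a
    by (cases z; cases z') (auto simp: gfun_def b arctan_less_iff)
qed

lemma gfun_mono: "z \<le> z' \<Longrightarrow> gfun z \<le> gfun z'"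
  using gfun_strict[of z z'] by (cases "z = z'") (simp_all add: order_le_less)

lemma gfun_meas: "gfun \<in> borel_measurable borel"
  unfolding gfun_def by measurable

lemma ess_sup_exists:
  assumes P: "prob_space M" and G: "subalgebra M G"
  shows "\<exists>Y. is_cond_ess_sup M G X Y"
proof -
  interpret prob_space M by fact
  define Zs where "Zs = {Z. Z \<in> borel_measurable G \<and> (AE w in M. ereal (X w) \<le> Z w)}"
  have gM: "(\<lambda>w. gfun (Z w)) \<in> borel_measurable M" if "Z \<in> borel_measurable G" for Z
    using measurable_from_subalg[OF G] measurable_comp[OF that gfun_meas] unfolding o_def by blast
  have gI: "integrable M (\<lambda>w. gfun (Z w))" if "Z \<in> borel_measurable G" for Z
    using gM[OF that] gfun_bound by (intro integrable_const_bound[where B=2]) auto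
  define I where "I = (\<lambda>Z. integral\<^sup>L M (\<lambda>w. gfun (Z w))) ` Zs"
  have bdd: "bdd_below I"
  proof (rule bdd_belowI[where m="-2"])
    fix x assume "x \<in> I"
    then obtain Z where Z: "Z \<in> Zs" "x = integral\<^sup>L M (\<lambda>w. gfun (Z w))" unfolding I_def by auto
    have "integral\<^sup>L M (\<lambda>w. -2) \<le> integral\<^sup>L M (\<lambda>w. gfun (Z w))"
      using Z(1) gI[of Z] gfun_ge unfolding Zs_def
      by (intro integral_mono) simp_all
    then show "-2 \<le> x" using Z by (simp add: prob_space)
  qed
  have ne: "(\<lambda>_. \<infinity>) \<in> Zs" unfolding Zs_def by auto
  hence Ine: "I \<noteq> {}" unfolding I_def by auto
  define m where "m = Inf I"
  have "\<forall>n::nat. \<exists>Z. Z \<in> Zs \<and> integral\<^sup>L M (\<lambda>w. gfun (Z w)) < m + 1 / (Suc n)"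
  proof
    fix n :: nat
    have "Inf I < m + 1 / Suc n" unfolding m_def by simp
    then obtain x where "x \<in> I" "x < m + 1 / Suc n" using cInf_lessD[OF Ine] by blast
    then show "\<exists>Z. Z \<in> Zs \<and> integral\<^sup>L M (\<lambda>w. gfun (Z w)) < m + 1 / (Suc n)"
      unfolding I_def by auto
  qed
  then obtain Zn where Zn0: "\<forall>n. Zn n \<in> Zs \<and> integral\<^sup>L M (\<lambda>w. gfun (Zn n w)) < m + 1 / (Suc n)"
    by (rule choice[THEN exE])
  have Zn: "\<And>n. Zn n \<in> Zs" "\<And>n. integral\<^sup>L M (\<lambda>w. gfun (Zn n w)) < m + 1 / (Suc n)"
    using Zn0 by simp_all
  define Y where "Y = (\<lambda>w. INF n. Zn n w)"
  have ZnG: "Zn n \<in> borel_measurable G" for n using Zn(1)[of n] unfolding Zs_def by blast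
  have YG: "Y \<in> borel_measurable G" unfolding Y_def by (rule borel_measurable_INF) (simp_all add: ZnG)
  have "AE w in M. \<forall>n. ereal (X w) \<le> Zn n w" using Zn(1) unfolding Zs_def by (simp add: AE_all_countable)
  hence YX: "AE w in M. ereal (X w) \<le> Y w" unfolding Y_def by eventually_elim (auto intro: INF_greatest)
  have Yle: "integral\<^sup>L M (\<lambda>w. gfun (Y w)) \<le> m"
  proof (rule field_le_epsilon)
    fix e :: real assume "0 < e"
    then obtain n :: nat where n: "1 / Suc n < e" using nat_approx_posE by blast
    have "integral\<^sup>L M (\<lambda>w. gfun (Y w)) \<le> integral\<^sup>L M (\<lambda>w. gfun (Zn n w))"
    proof (rule integral_mono)
      show "integrable M (\<lambda>w. gfun (Y w))" using gI[OF YG] .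
      show "integrable M (\<lambda>w. gfun (Zn n w))" using gI[OF ZnG] .
      fix w have "Y w \<le> Zn n w" unfolding Y_def by (rule INF_lower) auto
      then show "gfun (Y w) \<le> gfun (Zn n w)" by (rule gfun_mono)
    qed
    also have "\<dots> < m + 1 / Suc n" by (rule Zn(2))
    finally show "integral\<^sup>L M (\<lambda>w. gfun (Y w)) \<le> m + e" using n by simp
  qed
  have "is_cond_ess_sup M G X Y"
    unfolding is_cond_ess_sup_def
  proof (intro conjI ballI impI YG YX)
    fix Z assume ZG: "Z \<in> borel_measurable G" and ZX: "AE w in M. ereal (X w) \<le> Z w"
    define W where "W = (\<lambda>w. min (Y w) (Z w))"
    have WG: "W \<in> borel_measurable G" unfolding W_def using YG ZG by measurable
    have "AE w in M. ereal (X w) \<le> W w" using YX ZX unfolding W_def by eventually_elim simp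
    hence WZ: "W \<in> Zs" using WG unfolding Zs_def by simp
    have "m \<le> integral\<^sup>L M (\<lambda>w. gfun (W w))" unfolding m_def I_def
      by (intro cInf_lower bdd[unfolded I_def] imageI WZ)
    hence int0: "integral\<^sup>L M (\<lambda>w. gfun (Y w) - gfun (W w)) \<le> 0"
      using Yle gI[OF YG] gI[OF WG] by simp
    have nn: "gfun (W w) \<le> gfun (Y w)" for w
      unfolding W_def by (rule gfun_mono) simp
    have "integral\<^sup>L M (\<lambda>w. gfun (Y w) - gfun (W w)) = 0"
      using nn by (intro antisym int0 integral_nonneg_AE AE_I2) simp
    hence "AE w in M. gfun (Y w) - gfun (W w) = 0"
      using nn gI[OF YG] gI[OF WG] by (subst integral_nonneg_eq_0_iff_AE[symmetric]) (simp_all add: AE_I2)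
    then show "AE w in M. Y w \<le> Z w"
    proof eventually_elim
      fix w assume "gfun (Y w) - gfun (W w) = 0"
      show "Y w \<le> Z w"
      proof (rule ccontr)
        assume "\<not> Y w \<le> Z w"
        hence lt: "Z w < Y w" by simp
        hence "W w = Z w" unfolding W_def by simp
        with gfun_strict[OF lt] \<open>gfun (Y w) - gfun (W w) = 0\<close> show False by simp
      qed
    qed
  qed
  then show ?thesis by (rule exI[of _ Y])
qed

lemma ess_inf_exists:
  assumes P: "prob_space M" and G: "subalgebra M G"
  shows "\<exists>Y. is_cond_ess_inf M G X Y"
proof -
  obtain Y where Y: "is_cond_ess_sup M G (\<lambda>w. - X w) Y" using ess_sup_exists[OF assms] by blast
  have "is_cond_ess_inf M G X (\<lambda>w. - Y w)"
    unfolding is_cond_ess_inf_def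
  proof (intro conjI ballI impI)
    note Yd = Y[unfolded is_cond_ess_sup_def]
    have "Y \<in> borel_measurable G" using Yd by (rule conjunct1)
    then show "(\<lambda>w. - Y w) \<in> borel_measurable G" by (rule borel_measurable_uminus_ereal)
    have "AE w in M. ereal (- X w) \<le> Y w" using Yd by (rule conjunct2[THEN conjunct1])
    then show "AE w in M. - Y w \<le> ereal (X w)"
    proof eventually_elim
      fix w assume "ereal (- X w) \<le> Y w"
      then have "- ereal (X w) \<le> Y w" by (simp only: uminus_ereal.simps(1))
      from ereal_uminus_le_reorder[THEN iffD1, OF this] show "- Y w \<le> ereal (X w)" .
    qed
    fix Z assume ZG: "Z \<in> borel_measurable G" and ZX: "AE w in M. Z w \<le> ereal (X w)"
    have "(\<lambda>w. - Z w) \<in> borel_measurable G" using ZG by (rule borel_measurable_uminus_ereal)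
    moreover have "AE w in M. ereal (- X w) \<le> - Z w" using ZX
    proof eventually_elim
      fix w assume "Z w \<le> ereal (X w)"
      then show "ereal (- X w) \<le> - Z w" by (simp only: uminus_ereal.simps(1)[symmetric] ereal_minus_le_minus)
    qed
    ultimately have "AE w in M. Y w \<le> - Z w" using Yd[THEN conjunct2, THEN conjunct2] by (elim ballE impE) auto
    then show "AE w in M. Z w \<le> - Y w"
    proof eventually_elim
      fix w assume "Y w \<le> - Z w"
      then have "- (- Y w) \<le> - Z w" by (simp only: ereal_uminus_uminus)
      then show "Z w \<le> - Y w" by (simp only: ereal_minus_le_minus)
    qed
  qed
  then show ?thesis by (rule exI[of _ "\<lambda>w. - Y w"])
qed

lemma cond_ess_sup_prop:
  assumes "prob_space M" "subalgebra M G"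
  shows "is_cond_ess_sup M G X (cond_ess_sup M G X)"
proof -
  obtain Y where "is_cond_ess_sup M G X Y" using ess_sup_exists[OF assms, of X] by (elim exE)
  then show ?thesis unfolding cond_ess_sup_def by (rule someI[where P="is_cond_ess_sup M G X"])
qed

lemma cond_ess_inf_prop:
  assumes "prob_space M" "subalgebra M G"
  shows "is_cond_ess_inf M G X (cond_ess_inf M G X)"
proof -
  obtain Y where "is_cond_ess_inf M G X Y" using ess_inf_exists[OF assms, of X] by (elim exE)
  then show ?thesis unfolding cond_ess_inf_def by (rule someI[where P="is_cond_ess_inf M G X"])
qed



lemma bm_fst[measurable (raw)]:
  fixes \<zeta> :: "'a \<Rightarrow> real \<times> real"
  shows "\<zeta> \<in> borel_measurable N \<Longrightarrow> (\<lambda>w. fst (\<zeta> w)) \<in> borel_measurable N"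
proof -
  have "(fst :: real \<times> real \<Rightarrow> real) \<in> borel_measurable borel"
    by (intro borel_measurable_continuous_onI continuous_intros)
  then show "\<zeta> \<in> borel_measurable N \<Longrightarrow> (\<lambda>w. fst (\<zeta> w)) \<in> borel_measurable N"
    by (rule measurable_compose[rotated])
qed

lemma bm_snd[measurable (raw)]:
  fixes \<zeta> :: "'a \<Rightarrow> real \<times> real"
  shows "\<zeta> \<in> borel_measurable N \<Longrightarrow> (\<lambda>w. snd (\<zeta> w)) \<in> borel_measurable N"
proof -
  have "(snd :: real \<times> real \<Rightarrow> real) \<in> borel_measurable borel"
    by (intro borel_measurable_continuous_onI continuous_intros)
  then show "\<zeta> \<in> borel_measurable N \<Longrightarrow> (\<lambda>w. snd (\<zeta> w)) \<in> borel_measurable N"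
    by (rule measurable_compose[rotated])
qed

lemma meas_mono:
  assumes "filtration \<Omega> F" "i \<le> j" "f \<in> measurable (F i) N"
  shows "f \<in> measurable (F j) N"
proof -
  have "subalgebra (F j) (F i)" unfolding subalgebra_def
    using filtration.space_F[OF assms(1)] filtration.sets_F_mono[OF assms(1) assms(2)] by simp
  from measurable_from_subalg[OF this assms(3)] show ?thesis .
qed

lemma cone_iff: "x \<in> solv_cone Sb Sa t w \<longleftrightarrow> (\<forall>y. Sb t w \<le> y \<and> y \<le> Sa t w \<longrightarrow> 0 \<le> fst x + y * snd x)"
  unfolding solv_cone_def by auto

lemma cone_add:
  assumes "x \<in> solv_cone Sb Sa t w" "z \<in> solv_cone Sb Sa t w"
  shows "x + z \<in> solv_cone Sb Sa t w"
  unfolding cone_iff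
proof (intro allI impI)
  fix y assume y: "Sb t w \<le> y \<and> y \<le> Sa t w"
  have "0 \<le> fst x + y * snd x" "0 \<le> fst z + y * snd z" using assms y unfolding cone_iff by blast+
  then show "0 \<le> fst (x + z) + y * snd (x + z)" by (simp add: distrib_left)
qed

lemma neg_cone: "x \<in> uminus ` solv_cone Sb Sa t w \<longleftrightarrow> - x \<in> solv_cone Sb Sa t w"
proof
  assume "x \<in> uminus ` solv_cone Sb Sa t w"
  then obtain k where "k \<in> solv_cone Sb Sa t w" "x = - k" by blast
  then show "- x \<in> solv_cone Sb Sa t w" by simp
next
  assume "- x \<in> solv_cone Sb Sa t w"
  then show "x \<in> uminus ` solv_cone Sb Sa t w" by (rule image_eqI[rotated]) simp
qed

lemma zero_cone: "0 \<in> solv_cone Sb Sa t w" unfolding cone_iff by simp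

lemma one_step:
  fixes \<zeta> :: "'a \<Rightarrow> real \<times> real"
  assumes P: "prob_space M" and G: "subalgebra M (F t)"
    and \<zeta>G: "\<zeta> \<in> borel_measurable (F t)"
    and K1: "AE w in M. \<zeta> w \<in> solv_cone Sb Sa (Suc t) w"
    and pos1: "AE w in M. Sb (Suc t) w \<le> Sa (Suc t) w"
    and c1: "AE w in M. ereal (Sa t w) \<le> cond_ess_sup M (F t) (Sa (Suc t)) w"
    and c2: "AE w in M. cond_ess_inf M (F t) (Sb (Suc t)) w \<le> ereal (Sb t w)"
  shows "AE w in M. \<zeta> w \<in> solv_cone Sb Sa t w"
proof -
  define Y1 where "Y1 = cond_ess_inf M (F t) (Sb (Suc t))"
  define Y2 where "Y2 = cond_ess_sup M (F t) (Sa (Suc t))"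
  have Y1p: "is_cond_ess_inf M (F t) (Sb (Suc t)) Y1" unfolding Y1_def by (rule cond_ess_inf_prop[OF P G])
  have Y2p: "is_cond_ess_sup M (F t) (Sa (Suc t)) Y2" unfolding Y2_def by (rule cond_ess_sup_prop[OF P G])
  define Z1 where "Z1 = (\<lambda>w. if 0 < snd (\<zeta> w) then ereal (- fst (\<zeta> w) / snd (\<zeta> w)) else -\<infinity>)"
  define Z2 where "Z2 = (\<lambda>w. if snd (\<zeta> w) < 0 then ereal (- fst (\<zeta> w) / snd (\<zeta> w)) else \<infinity>)"
  have Z1G: "Z1 \<in> borel_measurable (F t)" unfolding Z1_def using \<zeta>G by measurable
  have Z2G: "Z2 \<in> borel_measurable (F t)" unfolding Z2_def using \<zeta>G by measurable
  have "AE w in M. Z1 w \<le> ereal (Sb (Suc t) w)" using K1 pos1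
  proof eventually_elim
    fix w assume k: "\<zeta> w \<in> solv_cone Sb Sa (Suc t) w" and p: "Sb (Suc t) w \<le> Sa (Suc t) w"
    have h: "0 \<le> fst (\<zeta> w) + Sb (Suc t) w * snd (\<zeta> w)" using k p unfolding cone_iff by simp
    show "Z1 w \<le> ereal (Sb (Suc t) w)"
    proof (cases "0 < snd (\<zeta> w)")
      case True
      have "- fst (\<zeta> w) / snd (\<zeta> w) \<le> Sb (Suc t) w"
        using h by (subst pos_divide_le_eq[OF True]) linarith
      then show ?thesis unfolding Z1_def using True by simp
    qed (simp add: Z1_def)
  qed
  hence Z1Y1: "AE w in M. Z1 w \<le> Y1 w" using Y1p Z1G unfolding is_cond_ess_inf_def by blast
  have "AE w in M. ereal (Sa (Suc t) w) \<le> Z2 w" using K1 pos1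
  proof eventually_elim
    fix w assume k: "\<zeta> w \<in> solv_cone Sb Sa (Suc t) w" and p: "Sb (Suc t) w \<le> Sa (Suc t) w"
    have h: "0 \<le> fst (\<zeta> w) + Sa (Suc t) w * snd (\<zeta> w)" using k p unfolding cone_iff by simp
    show "ereal (Sa (Suc t) w) \<le> Z2 w"
    proof (cases "snd (\<zeta> w) < 0")
      case True
      have "Sa (Suc t) w \<le> - fst (\<zeta> w) / snd (\<zeta> w)"
        using h by (subst neg_le_divide_eq[OF True]) linarith
      then show ?thesis unfolding Z2_def using True by simp
    qed (simp add: Z2_def)
  qed
  hence Y2Z2: "AE w in M. Y2 w \<le> Z2 w" using Y2p Z2G unfolding is_cond_ess_sup_def by blast
  show ?thesis using K1 pos1 c1[folded Y2_def] c2[folded Y1_def] Z1Y1 Y2Z2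
  proof eventually_elim
    fix w assume k: "\<zeta> w \<in> solv_cone Sb Sa (Suc t) w" and p: "Sb (Suc t) w \<le> Sa (Suc t) w"
      and a1: "ereal (Sa t w) \<le> Y2 w" and a2: "Y1 w \<le> ereal (Sb t w)"
      and a3: "Z1 w \<le> Y1 w" and a4: "Y2 w \<le> Z2 w"
    show "\<zeta> w \<in> solv_cone Sb Sa t w" unfolding cone_iff
    proof (intro allI impI)
      fix y assume y: "Sb t w \<le> y \<and> y \<le> Sa t w"
      consider "0 < snd (\<zeta> w)" | "snd (\<zeta> w) < 0" | "snd (\<zeta> w) = 0" by linarith
      then show "0 \<le> fst (\<zeta> w) + y * snd (\<zeta> w)"
      proof cases
        case 1
        have "Z1 w \<le> ereal (Sb t w)" using a3 a2 by (rule order_trans)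
        hence "- fst (\<zeta> w) / snd (\<zeta> w) \<le> Sb t w" using 1 unfolding Z1_def by simp
        hence "- fst (\<zeta> w) / snd (\<zeta> w) \<le> y" using y by linarith
        hence "- fst (\<zeta> w) \<le> y * snd (\<zeta> w)" by (subst (asm) pos_divide_le_eq[OF 1])
        then show ?thesis by linarith
      next
        case 2
        have "ereal (Sa t w) \<le> Z2 w" using a1 a4 by (rule order_trans)
        hence "Sa t w \<le> - fst (\<zeta> w) / snd (\<zeta> w)" using 2 unfolding Z2_def by simp
        hence "y \<le> - fst (\<zeta> w) / snd (\<zeta> w)" using y by linarith
        hence "- fst (\<zeta> w) \<le> y * snd (\<zeta> w)" by (subst (asm) neg_le_divide_eq[OF 2])
        then show ?thesis by linarith
      next
        case 3
        have "0 \<le> fst (\<zeta> w) + Sb (Suc t) w * snd (\<zeta> w)" using k p unfolding cone_iff by simp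
        then show ?thesis using 3 by simp
      qed
    qed
  qed
qed

lemma nec_sup:
  assumes P: "prob_space M" and filt: "filtration (space M) F" and sub: "\<And>t. subalgebra M (F t)"
    and NA: "NA2 M F Sb Sa T" and tT: "t < T"
    and SatG: "Sa t \<in> borel_measurable (F t)" and Sa1G: "Sa (Suc t) \<in> borel_measurable (F (Suc t))"
    and pos0: "AE w in M. Sb t w \<le> Sa t w"
  shows "AE w in M. ereal (Sa t w) \<le> cond_ess_sup M (F t) (Sa (Suc t)) w"
proof -
  define \<gamma> where "\<gamma> = cond_ess_sup M (F t) (Sa (Suc t))"
  have \<gamma>p: "is_cond_ess_sup M (F t) (Sa (Suc t)) \<gamma>" unfolding \<gamma>_def by (rule cond_ess_sup_prop[OF P sub])
  have \<gamma>G[measurable]: "\<gamma> \<in> borel_measurable (F t)" using \<gamma>p unfolding is_cond_ess_sup_def by (rule conjunct1)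
  have \<gamma>X: "AE w in M. ereal (Sa (Suc t) w) \<le> \<gamma> w" using \<gamma>p unfolding is_cond_ess_sup_def by (rule conjunct2[THEN conjunct1])
  note SatG[measurable] Sa1G[measurable]
  define C where "C = (\<lambda>w. \<gamma> w < ereal (Sa t w) \<and> \<gamma> w \<noteq> -\<infinity>)"
  have CG: "C \<in> measurable (F t) (count_space UNIV)" unfolding C_def by measurable
  have CG1[measurable]: "C \<in> measurable (F (Suc t)) (count_space UNIV)" by (rule meas_mono[OF filt _ CG]) simp
  define \<eta> where "\<eta> = (\<lambda>w. if C w then (real_of_ereal (\<gamma> w), -1::real) else 0)"
  define f where "f = (\<lambda>w. if C w then (- Sa (Suc t) w, 1::real) else 0)"
  define \<xi>s where "\<xi>s = (\<lambda>u w. if u = Suc t then f w else (0::real\<times>real))"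
  have \<eta>G: "\<eta> \<in> borel_measurable (F t)" unfolding \<eta>_def using CG by measurable
  have fG[measurable]: "f \<in> borel_measurable (F (Suc t))" unfolding f_def by measurable
  have \<xi>sL: "\<xi>s u \<in> L0 M (F u) (\<lambda>w. uminus ` solv_cone Sb Sa u w)" for u
    unfolding L0_def
  proof (intro CollectI conjI AE_I2)
    show "\<xi>s u \<in> borel_measurable (F u)"
      by (cases "u = Suc t") (simp_all add: \<xi>s_def fG)
    fix w show "\<xi>s u w \<in> uminus ` solv_cone Sb Sa u w"
      unfolding neg_cone
    proof (cases "u = Suc t \<and> C w")
      case True
      then show "- \<xi>s u w \<in> solv_cone Sb Sa u w" unfolding \<xi>s_def f_def cone_iff by auto
    next
      case False
      then have "\<xi>s u w = 0" unfolding \<xi>s_def f_def by auto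
      then show "- \<xi>s u w \<in> solv_cone Sb Sa u w" by (simp add: zero_cone)
    qed
  qed
  have sum_eq: "(\<lambda>w. \<Sum>u\<in>{t..T}. \<xi>s u w) = f"
  proof
    fix w
    have "(\<Sum>u\<in>{t..T}. \<xi>s u w) = (\<Sum>u\<in>{t..T}. if u = Suc t then f w else 0)" unfolding \<xi>s_def by simp
    also have "\<dots> = f w" using tT by (subst sum.delta) auto
    finally show "(\<Sum>u\<in>{t..T}. \<xi>s u w) = f w" .
  qed
  have fA: "f \<in> A_set M F Sb Sa t T" unfolding A_set_def
    using \<xi>sL sum_eq[symmetric] by blast
  have sumL: "(\<lambda>w. \<eta> w + f w) \<in> L0 M (F T) (solv_cone Sb Sa T)" unfolding L0_def
  proof (intro CollectI conjI)
    have "\<eta> \<in> borel_measurable (F (Suc t))" by (rule meas_mono[OF filt _ \<eta>G]) simp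
    then have "(\<lambda>w. \<eta> w + f w) \<in> borel_measurable (F (Suc t))" using fG by (rule borel_measurable_add)
    from meas_mono[OF filt _ this, of T] tT show "(\<lambda>w. \<eta> w + f w) \<in> borel_measurable (F T)" by simp
    show "AE w in M. \<eta> w + f w \<in> solv_cone Sb Sa T w" using \<gamma>X
    proof eventually_elim
      fix w assume h: "ereal (Sa (Suc t) w) \<le> \<gamma> w"
      show "\<eta> w + f w \<in> solv_cone Sb Sa T w"
      proof (cases "C w")
        case True
        then have fin: "\<gamma> w = ereal (real_of_ereal (\<gamma> w))" unfolding C_def by (cases "\<gamma> w") auto
        with h have "Sa (Suc t) w \<le> real_of_ereal (\<gamma> w)" by (metis ereal_less_eq(3))
        then show ?thesis using True unfolding \<eta>_def f_def cone_iff by simp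
      next
        case False
        then show ?thesis unfolding \<eta>_def f_def by (simp add: zero_cone)
      qed
    qed
  qed
  have "\<eta> \<in> L0 M (F t) (solv_cone Sb Sa t)"
    using NA tT \<eta>G fA sumL unfolding NA2_def by (meson less_imp_le)
  then have \<eta>K: "AE w in M. \<eta> w \<in> solv_cone Sb Sa t w" unfolding L0_def by simp
  show ?thesis using \<eta>K pos0 \<gamma>X
  proof eventually_elim
    fix w assume k: "\<eta> w \<in> solv_cone Sb Sa t w" and p: "Sb t w \<le> Sa t w"
      and h: "ereal (Sa (Suc t) w) \<le> \<gamma> w"
    show "ereal (Sa t w) \<le> cond_ess_sup M (F t) (Sa (Suc t)) w"
      unfolding \<gamma>_def[symmetric]
    proof (rule ccontr)
      assume "\<not> ereal (Sa t w) \<le> \<gamma> w"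
      then have lt: "\<gamma> w < ereal (Sa t w)" by simp
      have nm: "\<gamma> w \<noteq> -\<infinity>" using h by auto
      then have Cw: "C w" using lt unfolding C_def by simp
      have fin: "\<gamma> w = ereal (real_of_ereal (\<gamma> w))" using lt nm by (cases "\<gamma> w") auto
      have "0 \<le> real_of_ereal (\<gamma> w) + Sa t w * (-1)"
        using k p Cw unfolding \<eta>_def cone_iff by simp
      moreover have "ereal (real_of_ereal (\<gamma> w)) < ereal (Sa t w)" by (subst fin[symmetric]) (rule lt)
      then have "real_of_ereal (\<gamma> w) < Sa t w" by simp
      ultimately show False by linarith
    qed
  qed
qed

lemma nec_inf:
  assumes P: "prob_space M" and filt: "filtration (space M) F" and sub: "\<And>t. subalgebra M (F t)"
    and NA: "NA2 M F Sb Sa T" and tT: "t < T"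
    and SatG: "Sb t \<in> borel_measurable (F t)" and Sa1G: "Sb (Suc t) \<in> borel_measurable (F (Suc t))"
    and pos0: "AE w in M. Sb t w \<le> Sa t w"
  shows "AE w in M. cond_ess_inf M (F t) (Sb (Suc t)) w \<le> ereal (Sb t w)"
proof -
  define \<gamma> where "\<gamma> = cond_ess_inf M (F t) (Sb (Suc t))"
  have \<gamma>p: "is_cond_ess_inf M (F t) (Sb (Suc t)) \<gamma>" unfolding \<gamma>_def by (rule cond_ess_inf_prop[OF P sub])
  have \<gamma>G[measurable]: "\<gamma> \<in> borel_measurable (F t)" using \<gamma>p unfolding is_cond_ess_inf_def by (rule conjunct1)
  have \<gamma>X: "AE w in M. \<gamma> w \<le> ereal (Sb (Suc t) w)" using \<gamma>p unfolding is_cond_ess_inf_def by (rule conjunct2[THEN conjunct1])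
  note SatG[measurable] Sa1G[measurable]
  define C where "C = (\<lambda>w. ereal (Sb t w) < \<gamma> w \<and> \<gamma> w \<noteq> \<infinity>)"
  have CG: "C \<in> measurable (F t) (count_space UNIV)" unfolding C_def by measurable
  have CG1[measurable]: "C \<in> measurable (F (Suc t)) (count_space UNIV)" by (rule meas_mono[OF filt _ CG]) simp
  define \<eta> where "\<eta> = (\<lambda>w. if C w then (- real_of_ereal (\<gamma> w), 1::real) else 0)"
  define f where "f = (\<lambda>w. if C w then (Sb (Suc t) w, -1::real) else 0)"
  define \<xi>s where "\<xi>s = (\<lambda>u w. if u = Suc t then f w else (0::real\<times>real))"
  have \<eta>G: "\<eta> \<in> borel_measurable (F t)" unfolding \<eta>_def using CG by measurable
  have fG[measurable]: "f \<in> borel_measurable (F (Suc t))" unfolding f_def by measurable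
  have \<xi>sL: "\<xi>s u \<in> L0 M (F u) (\<lambda>w. uminus ` solv_cone Sb Sa u w)" for u
    unfolding L0_def
  proof (intro CollectI conjI AE_I2)
    show "\<xi>s u \<in> borel_measurable (F u)"
      by (cases "u = Suc t") (simp_all add: \<xi>s_def fG)
    fix w show "\<xi>s u w \<in> uminus ` solv_cone Sb Sa u w"
      unfolding neg_cone
    proof (cases "u = Suc t \<and> C w")
      case True
      then show "- \<xi>s u w \<in> solv_cone Sb Sa u w" unfolding \<xi>s_def f_def cone_iff by auto
    next
      case False
      then have "\<xi>s u w = 0" unfolding \<xi>s_def f_def by auto
      then show "- \<xi>s u w \<in> solv_cone Sb Sa u w" by (simp add: zero_cone)
    qed
  qed
  have sum_eq: "(\<lambda>w. \<Sum>u\<in>{t..T}. \<xi>s u w) = f"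
  proof
    fix w
    have "(\<Sum>u\<in>{t..T}. \<xi>s u w) = (\<Sum>u\<in>{t..T}. if u = Suc t then f w else 0)" unfolding \<xi>s_def by simp
    also have "\<dots> = f w" using tT by (subst sum.delta) auto
    finally show "(\<Sum>u\<in>{t..T}. \<xi>s u w) = f w" .
  qed
  have fA: "f \<in> A_set M F Sb Sa t T" unfolding A_set_def
    using \<xi>sL sum_eq[symmetric] by blast
  have sumL: "(\<lambda>w. \<eta> w + f w) \<in> L0 M (F T) (solv_cone Sb Sa T)" unfolding L0_def
  proof (intro CollectI conjI)
    have "\<eta> \<in> borel_measurable (F (Suc t))" by (rule meas_mono[OF filt _ \<eta>G]) simp
    then have "(\<lambda>w. \<eta> w + f w) \<in> borel_measurable (F (Suc t))" using fG by (rule borel_measurable_add)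
    from meas_mono[OF filt _ this, of T] tT show "(\<lambda>w. \<eta> w + f w) \<in> borel_measurable (F T)" by simp
    show "AE w in M. \<eta> w + f w \<in> solv_cone Sb Sa T w" using \<gamma>X
    proof eventually_elim
      fix w assume h: "\<gamma> w \<le> ereal (Sb (Suc t) w)"
      show "\<eta> w + f w \<in> solv_cone Sb Sa T w"
      proof (cases "C w")
        case True
        then have fin: "\<gamma> w = ereal (real_of_ereal (\<gamma> w))" unfolding C_def by (cases "\<gamma> w") auto
        have "ereal (real_of_ereal (\<gamma> w)) \<le> ereal (Sb (Suc t) w)" by (subst fin[symmetric]) (rule h)
        then have "real_of_ereal (\<gamma> w) \<le> Sb (Suc t) w" by simp
        then show ?thesis using True unfolding \<eta>_def f_def cone_iff by simp
      next
        case False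
        then show ?thesis unfolding \<eta>_def f_def by (simp add: zero_cone)
      qed
    qed
  qed
  have "\<eta> \<in> L0 M (F t) (solv_cone Sb Sa t)"
    using NA tT \<eta>G fA sumL unfolding NA2_def by (meson less_imp_le)
  then have \<eta>K: "AE w in M. \<eta> w \<in> solv_cone Sb Sa t w" unfolding L0_def by simp
  show ?thesis using \<eta>K pos0 \<gamma>X
  proof eventually_elim
    fix w assume k: "\<eta> w \<in> solv_cone Sb Sa t w" and p: "Sb t w \<le> Sa t w"
      and h: "\<gamma> w \<le> ereal (Sb (Suc t) w)"
    show "cond_ess_inf M (F t) (Sb (Suc t)) w \<le> ereal (Sb t w)"
      unfolding \<gamma>_def[symmetric]
    proof (rule ccontr)
      assume "\<not> \<gamma> w \<le> ereal (Sb t w)"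
      then have lt: "ereal (Sb t w) < \<gamma> w" by simp
      have nm: "\<gamma> w \<noteq> \<infinity>" using h by auto
      then have Cw: "C w" using lt unfolding C_def by simp
      have fin: "\<gamma> w = ereal (real_of_ereal (\<gamma> w))" using lt nm by (cases "\<gamma> w") auto
      have "0 \<le> - real_of_ereal (\<gamma> w) + Sb t w * 1"
        using k p Cw unfolding \<eta>_def cone_iff by simp
      moreover have "ereal (Sb t w) < ereal (real_of_ereal (\<gamma> w))" by (subst fin[symmetric]) (rule lt)
      then have "Sb t w < real_of_ereal (\<gamma> w)" by simp
      ultimately show False by linarith
    qed
  qed
qed


theorem theorem9p1:
  fixes M :: "'a measure" and F :: "nat \<Rightarrow> 'a measure"
    and Sb Sa :: "nat \<Rightarrow> 'a \<Rightarrow> real" and T :: nat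
  assumes "prob_space M"
    and "complete_measure M"
    and "filtration (space M) F"
    and "\<And>t. subalgebra M (F t)"
    and "\<And>A. A \<in> sets (F 0) \<Longrightarrow> measure M A = 0 \<or> measure M A = 1"
    and "\<And>t. t \<le> T \<Longrightarrow> Sb t \<in> borel_measurable (F t)"
    and "\<And>t. t \<le> T \<Longrightarrow> Sa t \<in> borel_measurable (F t)"
    and "\<And>t. t \<le> T \<Longrightarrow> AE w in M. 0 < Sb t w \<and> Sb t w \<le> Sa t w"
  shows "NA2 M F Sb Sa T \<longleftrightarrow>
     (\<forall>t < T. (AE w in M. cond_ess_sup M (F t) (Sa (t + 1)) w \<ge> ereal (Sa t w)) \<and>
              (AE w in M. ereal (Sb t w) \<ge> cond_ess_inf M (F t) (Sb (t + 1)) w))"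
proof
  note P = assms(1) and filt = assms(3) and sub = assms(4)
  have pos: "AE w in M. Sb t w \<le> Sa t w" if "t \<le> T" for t
    using assms(8)[OF that] by eventually_elim simp
  assume NA: "NA2 M F Sb Sa T"
  show "\<forall>t < T. (AE w in M. cond_ess_sup M (F t) (Sa (t + 1)) w \<ge> ereal (Sa t w)) \<and>
              (AE w in M. ereal (Sb t w) \<ge> cond_ess_inf M (F t) (Sb (t + 1)) w)"
  proof (intro allI impI conjI)
    fix t assume tT: "t < T"
    show "AE w in M. cond_ess_sup M (F t) (Sa (t + 1)) w \<ge> ereal (Sa t w)"
      using nec_sup[OF P filt sub NA tT assms(7) assms(7) pos] tT by simp
    show "AE w in M. ereal (Sb t w) \<ge> cond_ess_inf M (F t) (Sb (t + 1)) w"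
      using nec_inf[OF P filt sub NA tT assms(6) assms(6) pos] tT by simp
  qed
next
  note P = assms(1) and filt = assms(3) and sub = assms(4)
  have pos: "AE w in M. Sb t w \<le> Sa t w" if "t \<le> T" for t
    using assms(8)[OF that] by eventually_elim simp
  assume C: "\<forall>t < T. (AE w in M. cond_ess_sup M (F t) (Sa (t + 1)) w \<ge> ereal (Sa t w)) \<and>
              (AE w in M. ereal (Sb t w) \<ge> cond_ess_inf M (F t) (Sb (t + 1)) w)"
  define Q where "Q = (\<lambda>t. \<forall>\<eta> \<in> borel_measurable (F t).
        (\<exists>\<xi> \<in> A_set M F Sb Sa t T. (\<lambda>w. \<eta> w + \<xi> w) \<in> L0 M (F T) (solv_cone Sb Sa T))
        \<longrightarrow> \<eta> \<in> L0 M (F t) (solv_cone Sb Sa t))"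
  have "Q t" if "t \<le> T" for t
    using that
  proof (induction t rule: inc_induct)
    case base
    show ?case unfolding Q_def
    proof (intro ballI impI)
      fix \<eta> :: "'a \<Rightarrow> real \<times> real" assume \<eta>G: "\<eta> \<in> borel_measurable (F T)"
      assume "\<exists>\<xi> \<in> A_set M F Sb Sa T T. (\<lambda>w. \<eta> w + \<xi> w) \<in> L0 M (F T) (solv_cone Sb Sa T)"
      then obtain \<xi> where \<xi>A: "\<xi> \<in> A_set M F Sb Sa T T"
        and sL: "(\<lambda>w. \<eta> w + \<xi> w) \<in> L0 M (F T) (solv_cone Sb Sa T)" by blast
      from \<xi>A obtain \<xi>s where \<xi>s: "\<forall>u \<in> {T..T}. \<xi>s u \<in> L0 M (F u) (\<lambda>w. uminus ` solv_cone Sb Sa u w)"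
        and \<xi>eq: "\<xi> = (\<lambda>w. \<Sum>u\<in>{T..T}. \<xi>s u w)" unfolding A_set_def by blast
      have \<xi>eq': "\<xi> = \<xi>s T" unfolding \<xi>eq by simp
      have a1: "AE w in M. \<xi>s T w \<in> uminus ` solv_cone Sb Sa T w" using \<xi>s unfolding L0_def by simp
      have a2: "AE w in M. \<eta> w + \<xi>s T w \<in> solv_cone Sb Sa T w" using sL unfolding L0_def \<xi>eq' by simp
      have "AE w in M. \<eta> w \<in> solv_cone Sb Sa T w" using a1 a2
      proof eventually_elim
        fix w assume b1: "\<xi>s T w \<in> uminus ` solv_cone Sb Sa T w"
          and b2: "\<eta> w + \<xi>s T w \<in> solv_cone Sb Sa T w"
        from cone_add[OF b2 b1[unfolded neg_cone]] show "\<eta> w \<in> solv_cone Sb Sa T w" by simp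
      qed
      then show "\<eta> \<in> L0 M (F T) (solv_cone Sb Sa T)" unfolding L0_def using \<eta>G by simp
    qed
  next
    case (step n)
    note IH = step.IH[unfolded Q_def]
    show ?case unfolding Q_def
    proof (intro ballI impI)
      fix \<eta> :: "'a \<Rightarrow> real \<times> real" assume \<eta>G: "\<eta> \<in> borel_measurable (F n)"
      assume "\<exists>\<xi> \<in> A_set M F Sb Sa n T. (\<lambda>w. \<eta> w + \<xi> w) \<in> L0 M (F T) (solv_cone Sb Sa T)"
      then obtain \<xi> where \<xi>A: "\<xi> \<in> A_set M F Sb Sa n T"
        and sL: "(\<lambda>w. \<eta> w + \<xi> w) \<in> L0 M (F T) (solv_cone Sb Sa T)" by blast
      from \<xi>A obtain \<xi>s where \<xi>s: "\<forall>u \<in> {n..T}. \<xi>s u \<in> L0 M (F u) (\<lambda>w. uminus ` solv_cone Sb Sa u w)"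
        and \<xi>eq: "\<xi> = (\<lambda>w. \<Sum>u\<in>{n..T}. \<xi>s u w)" unfolding A_set_def by blast
      have nT: "n \<le> T" using step.hyps(2) by simp
      have \<xi>n: "\<xi>s n \<in> L0 M (F n) (\<lambda>w. uminus ` solv_cone Sb Sa n w)" using \<xi>s nT by simp
      have \<xi>nG: "\<xi>s n \<in> borel_measurable (F n)" using \<xi>n unfolding L0_def by simp
      have \<xi>nK: "AE w in M. \<xi>s n w \<in> uminus ` solv_cone Sb Sa n w" using \<xi>n unfolding L0_def by simp
      define \<eta>' where "\<eta>' = (\<lambda>w. \<eta> w + \<xi>s n w)"
      have \<eta>'G: "\<eta>' \<in> borel_measurable (F n)" unfolding \<eta>'_def using \<eta>G \<xi>nG by (rule borel_measurable_add)
      have \<eta>'G1: "\<eta>' \<in> borel_measurable (F (Suc n))" by (rule meas_mono[OF filt _ \<eta>'G]) simp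
      define \<xi>' where "\<xi>' = (\<lambda>w. \<Sum>u\<in>{Suc n..T}. \<xi>s u w)"
      have \<xi>'A: "\<xi>' \<in> A_set M F Sb Sa (Suc n) T" unfolding A_set_def \<xi>'_def
      proof (intro CollectI exI[of _ \<xi>s] conjI ballI refl)
        fix u assume "u \<in> {Suc n..T}"
        then show "\<xi>s u \<in> L0 M (F u) (\<lambda>w. uminus ` solv_cone Sb Sa u w)" using \<xi>s by simp
      qed
      have eq: "(\<lambda>w. \<eta>' w + \<xi>' w) = (\<lambda>w. \<eta> w + \<xi> w)"
      proof
        fix w
        have "\<xi> w = \<xi>s n w + \<xi>' w" unfolding \<xi>eq \<xi>'_def using nT by (simp add: sum.atLeast_Suc_atMost)
        then show "\<eta>' w + \<xi>' w = \<eta> w + \<xi> w" unfolding \<eta>'_def by (simp add: add.assoc)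
      qed
      have "\<eta>' \<in> L0 M (F (Suc n)) (solv_cone Sb Sa (Suc n))"
        using IH \<eta>'G1 \<xi>'A sL unfolding eq[symmetric] by blast
      then have K1: "AE w in M. \<eta>' w \<in> solv_cone Sb Sa (Suc n) w" unfolding L0_def by simp
      have Cn: "AE w in M. ereal (Sa n w) \<le> cond_ess_sup M (F n) (Sa (Suc n)) w"
        "AE w in M. cond_ess_inf M (F n) (Sb (Suc n)) w \<le> ereal (Sb n w)"
        using C step.hyps(2) by simp_all
      have "AE w in M. \<eta>' w \<in> solv_cone Sb Sa n w"
      proof -
        have pos1: "AE w in M. Sb (Suc n) w \<le> Sa (Suc n) w" using step.hyps(2) by (intro pos) simp
        show ?thesis by (rule one_step[where F=F and t=n and M=M and Sb=Sb and Sa=Sa, OF P sub[of n] \<eta>'G K1 pos1 Cn])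
      qed
      then have "AE w in M. \<eta> w \<in> solv_cone Sb Sa n w" using \<xi>nK
      proof eventually_elim
        fix w assume b1: "\<eta>' w \<in> solv_cone Sb Sa n w" and b2: "\<xi>s n w \<in> uminus ` solv_cone Sb Sa n w"
        from cone_add[OF b1 b2[unfolded neg_cone]] show "\<eta> w \<in> solv_cone Sb Sa n w"
          unfolding \<eta>'_def by simp
      qed
      then show "\<eta> \<in> L0 M (F n) (solv_cone Sb Sa n)" unfolding L0_def using \<eta>G by simp
    qed
  qed
  then show "NA2 M F Sb Sa T" unfolding NA2_def Q_def by blast
qed


end
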